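(* Let $r:\mathbb{R}^2\to\mathbb{R}$ be a positive reference image and $s:\mathbb{R}^2\to\mathbb{R}$ a signed image, with Radon transform $\widetilde s(t,\theta)$ and RSCDT $\widehat s(t,\theta)$ with respect to $r$. Let $x_0,y_0\in\mathbb{R}$ and $s_1(x_1,x_2)=s(x_1-x_0,x_2-y_0)$. Then for every $\theta\in[0,\pi]$ the RSCDT of $s_1$ is $$\widehat{s_1}(t,\theta)=\Big((g^\theta)^{-1}\circ(\widetilde s^{+})^\star(t,\theta),\ \|\widetilde s^{+}(\cdot,\theta)\|_1,\ (g^\theta)^{-1}\circ(\widetilde s^{-})^\star(t,\theta),\ \|\widetilde s^{-}(\cdot,\theta)\|_1\Big),$$ where $g^\theta(t)=t-x_0\cos\theta-y_0\sin\theta$.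
   Context: Radon transform: $\widetilde s(t,\theta)=\int_{\mathbb{R}^2}s(\mathbf{x})\delta(t-\mathbf{x}\cdot\xi_\theta)\,d\mathbf{x}$ with $\xi_\theta=(\cos\theta,\sin\theta)^T$. For nonnegative integrable $p$ on $\mathbb{R}$, $F_p(x)=\int_{-\infty}^x p(u)\,du$ and $F^\dagger(y)=\inf\{x:F(x)>y\}$. SCDT of a signed 1D signal $f$ with respect to positive reference $\rho$: with $f^+=\max\{0,f\}$, $f^-=\max\{0,-f\}$, set $(f^\pm)^\star=F^\dagger_{f^\pm/\|f^\pm\|_1}\circ F_{\rho/\|\rho\|_1}$ if $f^\pm\neq0$ and $(f^\pm)^\star=0$ if $f^\pm=0$; $\mathrm{SCDT}_\rho(f)=((f^+)^\star,\|f^+\|_1,(f^-)^\star,\|f^-\|_1)$. RSCDT of $s$ w.r.t. $r$: $\widehat s(\cdot,\theta)=\mathrm{SCDT}_{\widetilde r(\cdot,\theta)}(\widetilde s(\cdot,\theta))=\big((\widetilde s^+)^\star(\cdot,\theta),\|\widetilde s^+(\cdot,\theta)\|_1,(\widetilde s^-)^\star(\cdot,\theta),\|\widetilde s^-(\cdot,\theta)\|_1\big)$ for each $\theta\in[0,\pi]$. *)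

theory Defs
  imports "HOL-Analysis.Analysis"
begin

text \<open>Radon transform: integral of s over the line x \<cdot> xi_theta = t, parametrised by
  arc length u along the direction xi_theta-perp = (-sin theta, cos theta).\<close>
definition radon :: "(real \<times> real \<Rightarrow> real) \<Rightarrow> real \<Rightarrow> real \<Rightarrow> real" where
  "radon s t \<theta> = (LINT u|lborel. s (t * cos \<theta> - u * sin \<theta>, t * sin \<theta> + u * cos \<theta>))"

definition cdf :: "(real \<Rightarrow> real) \<Rightarrow> real \<Rightarrow> real" where
  "cdf p x = (LINT u:{..x}|lborel. p u)"

definition gen_inv :: "(real \<Rightarrow> real) \<Rightarrow> real \<Rightarrow> real" where
  "gen_inv F y = Inf {x. F x > y}"

definition l1norm :: "(real \<Rightarrow> real) \<Rightarrow> real" where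
  "l1norm f = (LINT u|lborel. \<bar>f u\<bar>)"

definition pos_part :: "(real \<Rightarrow> real) \<Rightarrow> real \<Rightarrow> real" where
  "pos_part f = (\<lambda>t. max 0 (f t))"

definition neg_part :: "(real \<Rightarrow> real) \<Rightarrow> real \<Rightarrow> real" where
  "neg_part f = (\<lambda>t. max 0 (- f t))"

text \<open>(p)^star w.r.t. reference rho; p is regarded as the zero element of L^1 iff its
  L^1 norm vanishes.\<close>
definition cdt_star :: "(real \<Rightarrow> real) \<Rightarrow> (real \<Rightarrow> real) \<Rightarrow> real \<Rightarrow> real" where
  "cdt_star \<rho> p = (if l1norm p = 0 then (\<lambda>_. 0)
      else gen_inv (cdf (\<lambda>u. p u / l1norm p)) \<circ> cdf (\<lambda>u. \<rho> u / l1norm \<rho>))"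

definition SCDT :: "(real \<Rightarrow> real) \<Rightarrow> (real \<Rightarrow> real)
     \<Rightarrow> (real \<Rightarrow> real) \<times> real \<times> (real \<Rightarrow> real) \<times> real" where
  "SCDT \<rho> f = (cdt_star \<rho> (pos_part f), l1norm (pos_part f),
                cdt_star \<rho> (neg_part f), l1norm (neg_part f))"

definition RSCDT :: "(real \<times> real \<Rightarrow> real) \<Rightarrow> (real \<times> real \<Rightarrow> real) \<Rightarrow> real
     \<Rightarrow> (real \<Rightarrow> real) \<times> real \<times> (real \<Rightarrow> real) \<times> real" where
  "RSCDT r s \<theta> = SCDT (\<lambda>t. radon r t \<theta>) (\<lambda>t. radon s t \<theta>)"

end

theory Submission
  imports Defs
begin


lemma lint_shift: "(LINT u|lborel. (f::real\<Rightarrow>real) (u + a)) = (LINT u|lborel. f u)"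
  using lborel_integral_real_affine[of 1 f a] by (simp add: add.commute)

lemma radon_shift:
  "radon (\<lambda>(x1, x2). s (x1 - x0, x2 - y0)) t \<theta> = radon s (t - (x0 * cos \<theta> + y0 * sin \<theta>)) \<theta>"
proof -
  define c where "c = x0 * cos \<theta> + y0 * sin \<theta>"
  define d where "d = - x0 * sin \<theta> + y0 * cos \<theta>"
  have sc: "sin \<theta> ^ 2 + cos \<theta> ^ 2 = 1" by simp
  have sc': "sin \<theta> * sin \<theta> + cos \<theta> * cos \<theta> = 1"
    using sin_cos_squared_add[of \<theta>] by (simp add: power2_eq_square)
  have e1: "c * cos \<theta> - d * sin \<theta> = x0"
  proof -
    have "c * cos \<theta> - d * sin \<theta> = x0 * (sin \<theta> * sin \<theta> + cos \<theta> * cos \<theta>)" unfolding c_def d_def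
      by (simp only: algebra_simps)
    then show ?thesis using sc' by simp
  qed
  have e2: "c * sin \<theta> + d * cos \<theta> = y0"
  proof -
    have "c * sin \<theta> + d * cos \<theta> = y0 * (sin \<theta> * sin \<theta> + cos \<theta> * cos \<theta>)" unfolding c_def d_def
      by (simp only: algebra_simps)
    then show ?thesis using sc' by simp
  qed
  have "radon (\<lambda>(x1, x2). s (x1 - x0, x2 - y0)) t \<theta>
      = (LINT u|lborel. s (t * cos \<theta> - u * sin \<theta> - x0, t * sin \<theta> + u * cos \<theta> - y0))"
    unfolding radon_def by simp
  also have "\<dots> = (LINT u|lborel. s (t * cos \<theta> - (u + d) * sin \<theta> - x0, t * sin \<theta> + (u + d) * cos \<theta> - y0))"
    by (rule lint_shift[symmetric, where f = "\<lambda>u. s (t * cos \<theta> - u * sin \<theta> - x0, t * sin \<theta> + u * cos \<theta> - y0)"])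
  also have "\<dots> = radon s (t - c) \<theta>"
    unfolding radon_def
  proof (rule arg_cong[where f = "\<lambda>f. LINT u|lborel. f u"], rule ext)
    fix u
    have "t * cos \<theta> - (u + d) * sin \<theta> - x0 = (t - c) * cos \<theta> - u * sin \<theta>"
      using e1 by (simp add: algebra_simps)
    moreover have "t * sin \<theta> + (u + d) * cos \<theta> - y0 = (t - c) * sin \<theta> + u * cos \<theta>"
      using e2 by (simp add: algebra_simps)
    ultimately show "s (t * cos \<theta> - (u + d) * sin \<theta> - x0, t * sin \<theta> + (u + d) * cos \<theta> - y0)
       = s ((t - c) * cos \<theta> - u * sin \<theta>, (t - c) * sin \<theta> + u * cos \<theta>)" by simp
  qed
  finally show ?thesis unfolding c_def .
qed

lemma l1norm_shift: "l1norm (\<lambda>u. p (u - c)) = l1norm p"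
  unfolding l1norm_def using lint_shift[of "\<lambda>u. \<bar>p (u - c)\<bar>" c] by simp

lemma cdf_shift: "cdf (\<lambda>u. p (u - c)) x = cdf p (x - c)"
proof -
  have "cdf (\<lambda>u. p (u - c)) x = (LINT u|lborel. indicator {..x} u * p (u - c))"
    unfolding cdf_def set_lebesgue_integral_def by simp
  also have "\<dots> = (LINT u|lborel. indicator {..x} (u + c) * p (u + c - c))"
    by (rule lint_shift[symmetric, where f = "\<lambda>u. indicator {..x} u * p (u - c)"])
  also have "\<dots> = (LINT u|lborel. indicator {..x - c} u * p u)"
    by (rule arg_cong[where f = "\<lambda>f. LINT u|lborel. f u"]) (auto simp: indicator_def)
  also have "\<dots> = cdf p (x - c)"
    unfolding cdf_def set_lebesgue_integral_def by simp
  finally show ?thesis .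
qed

lemma Inf_shift:
  fixes A :: "real set"
  assumes "A \<noteq> {}" "bdd_below A"
  shows "Inf ((\<lambda>z. z + c) ` A) = Inf A + c"
proof (rule antisym)
  show "Inf ((\<lambda>z. z + c) ` A) \<le> Inf A + c"
  proof -
    have "Inf ((\<lambda>z. z + c) ` A) - c \<le> z" if "z \<in> A" for z
    proof -
      have "bdd_below ((\<lambda>z. z + c) ` A)" using assms(2) unfolding bdd_below_def
        by (metis (no_types, lifting) add_le_cancel_right imageE)
      then have "Inf ((\<lambda>z. z + c) ` A) \<le> z + c" using that by (simp add: cInf_lower)
      then show ?thesis by simp
    qed
    then have "Inf ((\<lambda>z. z + c) ` A) - c \<le> Inf A" using assms(1) by (simp add: cInf_greatest)
    then show ?thesis by simp
  qed
  show "Inf A + c \<le> Inf ((\<lambda>z. z + c) ` A)"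
    using assms by (auto intro!: cInf_greatest cInf_lower simp: add_le_cancel_right)
qed

lemma gen_inv_shift:
  assumes "{z. F z > y} \<noteq> {}" "bdd_below {z. F z > y}"
  shows "gen_inv (\<lambda>x. F (x - c)) y = gen_inv F y + c"
proof -
  have "{x. F (x - c) > y} = (\<lambda>z. z + c) ` {z. F z > y}"
    by (auto simp: image_iff intro!: exI[where x = "_ - c"])
  then show ?thesis unfolding gen_inv_def using Inf_shift[OF assms] by simp
qed



lemma l1norm_integrable:
  fixes p :: "real \<Rightarrow> real"
  assumes "\<And>u. p u \<ge> 0" "l1norm p \<noteq> 0"
  shows "integrable lborel p" "l1norm p = (LINT u|lborel. p u)" "l1norm p > 0"
proof -
  have "integrable lborel (\<lambda>u. \<bar>p u\<bar>)"
    using assms(2) not_integrable_integral_eq unfolding l1norm_def by blast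
  then show ip: "integrable lborel p" using assms(1) by simp
  show e: "l1norm p = (LINT u|lborel. p u)" unfolding l1norm_def using assms(1) by simp
  have "(LINT u|lborel. p u) \<ge> 0" using assms(1) by simp
  then show "l1norm p > 0" using e assms(2) by linarith
qed

lemma cdf_div:
  fixes p :: "real \<Rightarrow> real"
  shows "cdf (\<lambda>u. p u / N) z = (LINT u:{..z}|lborel. p u) / N"
  unfolding cdf_def by simp

lemma G_mono:
  fixes p :: "real \<Rightarrow> real"
  assumes "\<And>u. p u \<ge> 0" "integrable lborel p" "z1 \<le> z2"
  shows "(LINT u:{..z1}|lborel. p u) \<le> (LINT u:{..z2}|lborel. p u)"
  unfolding set_lebesgue_integral_def
proof (rule integral_mono)
  show "integrable lborel (\<lambda>x. indicator {..z1} x *\<^sub>R p x)"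
    using assms(2) by (intro integrable_mult_indicator) auto
  show "integrable lborel (\<lambda>x. indicator {..z2} x *\<^sub>R p x)"
    using assms(2) by (intro integrable_mult_indicator) auto
  show "indicator {..z1} x *\<^sub>R p x \<le> indicator {..z2} x *\<^sub>R p x" for x
    using assms(1)[of x] assms(3) by (auto simp: indicator_def)
qed

lemma G_lim_bot:
  fixes p :: "real \<Rightarrow> real"
  assumes "integrable lborel p"
  shows "(\<lambda>n::nat. LINT u:{..- real n}|lborel. p u) \<longlonglongrightarrow> 0"
proof -
  have "(\<lambda>n::nat. LINT u|lborel. indicator {..- real n} u *\<^sub>R p u) \<longlonglongrightarrow> (LINT (u::real)|lborel. (0::real))"
  proof (rule integral_dominated_convergence[where w = "\<lambda>u. \<bar>p u\<bar>" and f = "\<lambda>u. 0::real" and M = lborel and s = "\<lambda>n u. indicator {..- real n} u *\<^sub>R p u"])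
    show "integrable lborel (\<lambda>u. \<bar>p u\<bar>)" using assms by simp
    show "\<And>i. (\<lambda>u. indicator {..- real i} u *\<^sub>R p u) \<in> borel_measurable lborel"
      using assms by measurable
    show "\<And>i. AE x in lborel. norm (indicator {..- real i} x *\<^sub>R p x) \<le> \<bar>p x\<bar>"
      by (auto simp: indicator_def)
    show "AE x in lborel. (\<lambda>i. indicator {..- real i} x *\<^sub>R p x) \<longlonglongrightarrow> 0"
    proof (rule AE_I2)
      fix x :: real
      obtain m :: nat where m: "real m > - x" using reals_Archimedean2 by blast
      have "eventually (\<lambda>i. indicator {..- real i} x *\<^sub>R p x = 0) sequentially"
        unfolding eventually_sequentially
        by (rule exI[of _ m]) (use m in \<open>auto simp: indicator_def\<close>)
      then show "(\<lambda>i. indicator {..- real i} x *\<^sub>R p x) \<longlonglongrightarrow> 0"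
        by (rule tendsto_eventually)
    qed
  qed simp
  then show ?thesis unfolding set_lebesgue_integral_def by simp
qed

lemma G_lim_top:
  fixes p :: "real \<Rightarrow> real"
  assumes "integrable lborel p"
  shows "(\<lambda>n::nat. LINT u:{..real n}|lborel. p u) \<longlonglongrightarrow> (LINT u|lborel. p u)"
proof -
  have "(\<lambda>n::nat. LINT u|lborel. indicator {..real n} u *\<^sub>R p u) \<longlonglongrightarrow> (LINT u|lborel. p u)"
  proof (rule integral_dominated_convergence[where w = "\<lambda>u. \<bar>p u\<bar>"])
    show "integrable lborel (\<lambda>u. \<bar>p u\<bar>)" using assms by simp
    show "\<And>i. (\<lambda>u. indicator {..real i} u *\<^sub>R p u) \<in> borel_measurable lborel"
      using assms by measurable
    show "p \<in> borel_measurable lborel" using assms by measurable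
    show "\<And>i. AE x in lborel. norm (indicator {..real i} x *\<^sub>R p x) \<le> \<bar>p x\<bar>"
      by (auto simp: indicator_def)
    show "AE x in lborel. (\<lambda>i. indicator {..real i} x *\<^sub>R p x) \<longlonglongrightarrow> p x"
    proof (rule AE_I2)
      fix x :: real
      obtain m :: nat where m: "real m > x" using reals_Archimedean2 by blast
      have "eventually (\<lambda>i. indicator {..real i} x *\<^sub>R p x = p x) sequentially"
        unfolding eventually_sequentially
        by (rule exI[of _ m]) (use m in \<open>auto simp: indicator_def\<close>)
      then show "(\<lambda>i. indicator {..real i} x *\<^sub>R p x) \<longlonglongrightarrow> p x"
        by (rule tendsto_eventually)
    qed
  qed
  then show ?thesis unfolding set_lebesgue_integral_def by simp
qed

lemma cdf_set_props:
  fixes p :: "real \<Rightarrow> real"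
  assumes nn: "\<And>u. p u \<ge> 0" and N: "l1norm p \<noteq> 0" and y: "0 < y" "y < 1"
  shows "{z. cdf (\<lambda>u. p u / l1norm p) z > y} \<noteq> {}"
    "bdd_below {z. cdf (\<lambda>u. p u / l1norm p) z > y}"
proof -
  note I = l1norm_integrable[OF nn N]
  define G where "G z = (LINT u:{..z}|lborel. p u)" for z
  define M where "M = l1norm p"
  have cd: "cdf (\<lambda>u. p u / l1norm p) z = G z / M" for z
    unfolding G_def M_def by (rule cdf_div)
  have Mp: "M > 0" using I(3) unfolding M_def .
  have "eventually (\<lambda>n. G (- real n) < y * M) sequentially"
    using order_tendstoD(2)[OF G_lim_bot[OF I(1)], of "y * M"] Mp y unfolding G_def by simp
  then obtain n :: nat where n: "G (- real n) < y * M" unfolding eventually_sequentially by blast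
  have "eventually (\<lambda>n. G (real n) > y * M) sequentially"
    using order_tendstoD(1)[OF G_lim_top[OF I(1)], of "y * M"] Mp y I(2) unfolding G_def M_def by simp
  then obtain m :: nat where m: "G (real m) > y * M" unfolding eventually_sequentially by blast
  show "{z. cdf (\<lambda>u. p u / l1norm p) z > y} \<noteq> {}"
    using m Mp by (auto simp: cd pos_less_divide_eq intro!: exI[of _ "real m"])
  show "bdd_below {z. cdf (\<lambda>u. p u / l1norm p) z > y}"
    unfolding bdd_below_def
  proof (intro exI[of _ "- real n"] ballI)
    fix z assume "z \<in> {z. cdf (\<lambda>u. p u / l1norm p) z > y}"
    then have "G z > y * M" using Mp by (auto simp: cd pos_less_divide_eq)
    show "- real n \<le> z"
    proof (rule ccontr)
      assume "\<not> - real n \<le> z"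
      then have "G z \<le> G (- real n)" unfolding G_def using G_mono[OF nn I(1)] by simp
      then show False using n \<open>G z > y * M\<close> by simp
    qed
  qed
qed



lemma r_meas:
  fixes r :: "real \<times> real \<Rightarrow> real"
  assumes "integrable lborel r"
  shows "r \<in> borel_measurable borel"
  using assms by (simp only: borel_measurable_integrable measurable_lborel2[symmetric])

lemma rot_nn:
  fixes r :: "real \<times> real \<Rightarrow> real"
  assumes [measurable]: "r \<in> borel_measurable borel" and sc: "S^2 + C^2 = 1"
  shows "(\<integral>\<^sup>+t. \<integral>\<^sup>+u. ennreal (r (t * C - u * S, t * S + u * C)) \<partial>lborel \<partial>lborel)
       = (\<integral>\<^sup>+x. \<integral>\<^sup>+y. ennreal (r (x, y)) \<partial>lborel \<partial>lborel)"
proof (cases "S = 0")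
  case False
  have inner: "ennreal \<bar>S\<bar> * (\<integral>\<^sup>+u. ennreal (r (t * C - u * S, t * S + u * C)) \<partial>lborel)
      = (\<integral>\<^sup>+x. ennreal (r (x, (t - x * C) / S)) \<partial>lborel)" for t
  proof -
    have "(\<integral>\<^sup>+x. ennreal (r (x, (t - x * C) / S)) \<partial>lborel)
       = ennreal \<bar>- S\<bar> * (\<integral>\<^sup>+u. ennreal (r (t * C + (- S) * u, (t - (t * C + (- S) * u) * C) / S)) \<partial>lborel)"
      by (rule nn_integral_real_affine) (use False in auto)
    also have "(\<lambda>u. ennreal (r (t * C + (- S) * u, (t - (t * C + (- S) * u) * C) / S)))
        = (\<lambda>u. ennreal (r (t * C - u * S, t * S + u * C)))"
    proof
      fix u
      have "(t - (t * C + (- S) * u) * C) / S = (t * (1 - C^2) + S * u * C) / S"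
        by (simp add: algebra_simps power2_eq_square)
      also have "\<dots> = (t * S^2 + S * u * C) / S" proof -
        have h: "1 - C^2 = S^2" using sc by simp
        show ?thesis by (simp only: h)
      qed
      also have "\<dots> = t * S + u * C" using False by (simp add: field_simps power2_eq_square)
      finally show "ennreal (r (t * C + (- S) * u, (t - (t * C + (- S) * u) * C) / S))
          = ennreal (r (t * C - u * S, t * S + u * C))" by (simp add: mult.commute)
    qed
    finally show ?thesis by simp
  qed
  have inner2: "(\<integral>\<^sup>+t. ennreal (r (x, (t - x * C) / S)) \<partial>lborel)
      = ennreal \<bar>S\<bar> * (\<integral>\<^sup>+y. ennreal (r (x, y)) \<partial>lborel)" for x
  proof -
    have "(\<integral>\<^sup>+y. ennreal (r (x, y)) \<partial>lborel)
       = ennreal \<bar>1 / S\<bar> * (\<integral>\<^sup>+t. ennreal (r (x, - x * C / S + (1 / S) * t)) \<partial>lborel)"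
      by (rule nn_integral_real_affine) (use False in auto)
    also have "(\<lambda>t. ennreal (r (x, - x * C / S + (1 / S) * t))) = (\<lambda>t. ennreal (r (x, (t - x * C) / S)))"
      by (rule ext) (simp add: diff_divide_distrib mult.commute)
    finally have "(\<integral>\<^sup>+y. ennreal (r (x, y)) \<partial>lborel)
       = ennreal \<bar>1 / S\<bar> * (\<integral>\<^sup>+t. ennreal (r (x, (t - x * C) / S)) \<partial>lborel)" .
    then have "ennreal \<bar>S\<bar> * (\<integral>\<^sup>+y. ennreal (r (x, y)) \<partial>lborel)
       = (ennreal \<bar>S\<bar> * ennreal \<bar>1 / S\<bar>) * (\<integral>\<^sup>+t. ennreal (r (x, (t - x * C) / S)) \<partial>lborel)"
      by (simp add: mult.assoc)
    also have "ennreal \<bar>S\<bar> * ennreal \<bar>1 / S\<bar> = 1"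
      using False by (simp flip: ennreal_mult add: abs_mult[symmetric])
    finally show ?thesis by simp
  qed
  have "ennreal \<bar>S\<bar> * (\<integral>\<^sup>+t. \<integral>\<^sup>+u. ennreal (r (t * C - u * S, t * S + u * C)) \<partial>lborel \<partial>lborel)
      = (\<integral>\<^sup>+t. ennreal \<bar>S\<bar> * (\<integral>\<^sup>+u. ennreal (r (t * C - u * S, t * S + u * C)) \<partial>lborel) \<partial>lborel)"
    by (rule nn_integral_cmult[symmetric]) measurable
  also have "\<dots> = (\<integral>\<^sup>+t. \<integral>\<^sup>+x. ennreal (r (x, (t - x * C) / S)) \<partial>lborel \<partial>lborel)"
    by (simp add: inner)
  also have "\<dots> = (\<integral>\<^sup>+x. \<integral>\<^sup>+t. ennreal (r (x, (t - x * C) / S)) \<partial>lborel \<partial>lborel)"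
    by (rule lborel_pair.Fubini') measurable
  also have "\<dots> = (\<integral>\<^sup>+x. ennreal \<bar>S\<bar> * (\<integral>\<^sup>+y. ennreal (r (x, y)) \<partial>lborel) \<partial>lborel)"
    by (simp add: inner2)
  also have "\<dots> = ennreal \<bar>S\<bar> * (\<integral>\<^sup>+x. \<integral>\<^sup>+y. ennreal (r (x, y)) \<partial>lborel \<partial>lborel)"
    by (rule nn_integral_cmult) measurable
  finally have "ennreal \<bar>S\<bar> * (\<integral>\<^sup>+t. \<integral>\<^sup>+u. ennreal (r (t * C - u * S, t * S + u * C)) \<partial>lborel \<partial>lborel)
     = ennreal \<bar>S\<bar> * (\<integral>\<^sup>+x. \<integral>\<^sup>+y. ennreal (r (x, y)) \<partial>lborel \<partial>lborel)" .
  then show ?thesis using False unfolding ennreal_mult_cancel_left by simp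
next
  case True
  then have C: "\<bar>C\<bar> = 1" using sc by (simp add: abs_square_eq_1)
  then have CC: "C \<noteq> 0" by auto
  have inner: "(\<integral>\<^sup>+u. ennreal (r (t * C - u * S, t * S + u * C)) \<partial>lborel) = (\<integral>\<^sup>+y. ennreal (r (t * C, y)) \<partial>lborel)" for t
  proof -
    have m: "(\<lambda>y. ennreal (r (t * C, y))) \<in> borel_measurable borel" by measurable
    have "(\<integral>\<^sup>+y. ennreal (r (t * C, y)) \<partial>lborel) = ennreal \<bar>C\<bar> * (\<integral>\<^sup>+u. ennreal (r (t * C, 0 + C * u)) \<partial>lborel)"
      by (rule nn_integral_real_affine[OF m CC])
    then show ?thesis using C True by (simp add: mult.commute)
  qed
  have m2': "(\<lambda>x. \<integral>\<^sup>+y. ennreal (r (x, y)) \<partial>lborel) \<in> borel_measurable lborel" by measurable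
  have m2: "(\<lambda>x. \<integral>\<^sup>+y. ennreal (r (x, y)) \<partial>lborel) \<in> borel_measurable borel"
    using m2' by (simp only: measurable_lborel2)
  have "(\<integral>\<^sup>+x. \<integral>\<^sup>+y. ennreal (r (x, y)) \<partial>lborel \<partial>lborel) = ennreal \<bar>C\<bar> * (\<integral>\<^sup>+t. \<integral>\<^sup>+y. ennreal (r (0 + C * t, y)) \<partial>lborel \<partial>lborel)"
    by (rule nn_integral_real_affine[OF m2 CC])
  then have "(\<integral>\<^sup>+t. \<integral>\<^sup>+y. ennreal (r (t * C, y)) \<partial>lborel \<partial>lborel) = (\<integral>\<^sup>+x. \<integral>\<^sup>+y. ennreal (r (x, y)) \<partial>lborel \<partial>lborel)"
    using C by (simp add: mult.commute)
  then show ?thesis by (simp only: inner)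
qed



lemma set_int_pos:
  fixes g :: "real \<Rightarrow> real"
  assumes g: "integrable lborel g" and nn: "\<And>x. g x \<ge> 0"
    and pos: "AE x in lborel. g x > 0" and A: "A \<in> sets lborel" and mA: "emeasure lborel A \<noteq> 0"
  shows "(LINT x|lborel. indicator A x * g x) > 0"
proof -
  have hi: "integrable lborel (\<lambda>x. indicator A x * g x)"
    using integrable_real_mult_indicator[OF A g] by (simp add: mult.commute)
  have "(LINT x|lborel. indicator A x * g x) \<ge> 0"
    by (rule integral_nonneg_AE) (use nn in \<open>auto simp: indicator_def\<close>)
  moreover have "(LINT x|lborel. indicator A x * g x) \<noteq> 0"
  proof
    assume "(LINT x|lborel. indicator A x * g x) = 0"
    then have "AE x in lborel. indicator A x * g x = 0"
      using integral_nonneg_eq_0_iff_AE[OF hi] nn by (auto simp: indicator_def)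
    then have "AE x in lborel. x \<notin> A"
      using pos by eventually_elim (auto simp: indicator_def)
    then have "emeasure lborel A = 0"
      using AE_iff_measurable[of A lborel "\<lambda>x. x \<notin> A"] A by auto
    then show False using mA by simp
  qed
  ultimately show ?thesis by linarith
qed

lemma emeasure_pos:
  fixes a b :: real
  assumes "a < b" "{a..b} \<subseteq> A" "A \<in> sets lborel"
  shows "emeasure lborel A \<noteq> 0"
proof -
  have "emeasure lborel {a..b} \<le> emeasure lborel A"
    using assms by (intro emeasure_mono) auto
  moreover have "emeasure lborel {a..b} = ennreal (b - a)" using assms by simp
  ultimately show ?thesis using assms(1) by (metis diff_gt_0_iff_gt ennreal_eq_0_iff le_zero_eq not_le)
qed

lemma radon_props:
  fixes r :: "real \<times> real \<Rightarrow> real"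
  assumes r_pos: "\<And>x. r x > 0" and r_int: "integrable lborel r"
  shows "integrable lborel (\<lambda>t. radon r t \<theta>)" "\<And>t. radon r t \<theta> \<ge> 0"
    "AE t in lborel. radon r t \<theta> > 0"
proof -
  note rm[measurable] = r_meas[OF r_int]
  define f where "f = (\<lambda>(t, u). r (t * cos \<theta> - u * sin \<theta>, t * sin \<theta> + u * cos \<theta>))"
  have fm[measurable]: "f \<in> borel_measurable (lborel \<Otimes>\<^sub>M lborel)" unfolding f_def by measurable
  have r2: "integrable (lborel \<Otimes>\<^sub>M lborel) r"
    using r_int by (simp add: lborel_prod)
  have "(\<integral>\<^sup>+x. ennreal (norm (r x)) \<partial>(lborel \<Otimes>\<^sub>M lborel)) < \<infinity>"
    using r2 unfolding integrable_iff_bounded by simp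
  then have fin_r: "(\<integral>\<^sup>+x. ennreal (r x) \<partial>(lborel \<Otimes>\<^sub>M lborel)) < \<infinity>"
    using r_pos by (simp add: less_imp_le)
  have rm2: "r \<in> borel_measurable (lborel \<Otimes>\<^sub>M lborel)" by (simp add: lborel_prod)
  have "(\<integral>\<^sup>+x. \<integral>\<^sup>+y. ennreal (r (x, y)) \<partial>lborel \<partial>lborel) = (\<integral>\<^sup>+x. ennreal (r x) \<partial>(lborel \<Otimes>\<^sub>M lborel))"
    using lborel.nn_integral_fst[of "\<lambda>x. ennreal (r x)" lborel] rm2 by simp
  moreover have "(\<integral>\<^sup>+x. ennreal (f x) \<partial>(lborel \<Otimes>\<^sub>M lborel))
      = (\<integral>\<^sup>+t. \<integral>\<^sup>+u. ennreal (r (t * cos \<theta> - u * sin \<theta>, t * sin \<theta> + u * cos \<theta>)) \<partial>lborel \<partial>lborel)"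
    using lborel.nn_integral_fst[of "\<lambda>x. ennreal (f x)" lborel] fm unfolding f_def by simp
  ultimately have fin_f: "(\<integral>\<^sup>+x. ennreal (f x) \<partial>(lborel \<Otimes>\<^sub>M lborel)) < \<infinity>"
    using rot_nn[OF rm, of "sin \<theta>" "cos \<theta>"] fin_r by simp
  have fi: "integrable (lborel \<Otimes>\<^sub>M lborel) f"
    by (rule integrableI_nonneg) (use fm fin_f r_pos in \<open>auto simp: f_def less_imp_le split: prod.splits\<close>)
  have rad: "radon r t \<theta> = (\<integral>u. f (t, u) \<partial>lborel)" for t
    unfolding radon_def f_def by simp
  show "integrable lborel (\<lambda>t. radon r t \<theta>)"
    unfolding rad by (rule lborel_pair.integrable_fst'[OF fi])
  show nn: "radon r t \<theta> \<ge> 0" for t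
    unfolding rad by (rule integral_nonneg_AE) (use r_pos in \<open>auto simp: f_def less_imp_le\<close>)
  show "AE t in lborel. radon r t \<theta> > 0"
    using lborel_pair.AE_integrable_fst'[OF fi]
  proof eventually_elim
    case (elim t)
    have "(LINT x|lborel. indicator UNIV x * f (t, x)) > 0"
      by (rule set_int_pos) (use elim r_pos emeasure_pos[of 0 1 UNIV] in \<open>auto simp: f_def less_imp_le\<close>)
    then show ?case unfolding rad by simp
  qed
qed



lemma cdf_rho:
  fixes r :: "real \<times> real \<Rightarrow> real"
  assumes r_pos: "\<And>x. r x > 0" and r_int: "integrable lborel r"
  shows "0 < cdf (\<lambda>u. radon r u \<theta> / l1norm (\<lambda>t. radon r t \<theta>)) t
     \<and> cdf (\<lambda>u. radon r u \<theta> / l1norm (\<lambda>t. radon r t \<theta>)) t < 1"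
proof -
  define \<rho> where "\<rho> = (\<lambda>t. radon r t \<theta>)"
  have P: "integrable lborel \<rho>" "\<And>t. \<rho> t \<ge> 0" "AE t in lborel. \<rho> t > 0"
    unfolding \<rho>_def using radon_props[OF r_pos r_int, where \<theta> = \<theta>] by auto
  define a where "a = (LINT x|lborel. indicator {..t} x * \<rho> x)"
  define b where "b = (LINT x|lborel. indicator {t<..} x * \<rho> x)"
  have a: "a > 0" unfolding a_def
    by (rule set_int_pos) (use P emeasure_pos[of "t - 1" t "{..t}"] in auto)
  have b: "b > 0" unfolding b_def
  proof (rule set_int_pos)
    have "{t + 1..t + 2} \<subseteq> {t<..}" by auto
    then show "emeasure lborel {t<..} \<noteq> 0" using emeasure_pos[of "t + 1" "t + 2" "{t<..}"] by simp
  qed (use P in auto)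
  have L: "l1norm \<rho> = a + b"
  proof -
    have "l1norm \<rho> = (LINT x|lborel. \<rho> x)" unfolding l1norm_def using P(2) by simp
    also have "\<dots> = (LINT x|lborel. indicator {..t} x * \<rho> x + indicator {t<..} x * \<rho> x)"
      by (rule arg_cong[where f = "\<lambda>f. LINT x|lborel. f x"]) (auto simp: indicator_def)
    also have "\<dots> = a + b" unfolding a_def b_def
    proof (rule Bochner_Integration.integral_add)
      show "integrable lborel (\<lambda>x. indicator {..t} x * \<rho> x)"
        using integrable_real_mult_indicator[OF _ P(1), of "{..t}"] by (simp add: mult.commute)
      show "integrable lborel (\<lambda>x. indicator {t<..} x * \<rho> x)"
        using integrable_real_mult_indicator[OF _ P(1), of "{t<..}"] by (simp add: mult.commute)
    qed
    finally show ?thesis .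
  qed
  have "cdf (\<lambda>u. \<rho> u / l1norm \<rho>) t = a / l1norm \<rho>"
    unfolding cdf_div a_def set_lebesgue_integral_def by simp
  then have eq: "cdf (\<lambda>u. \<rho> u / l1norm \<rho>) t = a / (a + b)" using L by simp
  have "0 < a / (a + b)" using a b by simp
  moreover have "a / (a + b) < 1" using a b by simp
  ultimately show ?thesis using eq unfolding \<rho>_def by simp
qed

lemma cdt_star_shift:
  fixes p \<rho> :: "real \<Rightarrow> real"
  assumes nn: "\<And>u. p u \<ge> 0"
    and rho: "\<And>t. 0 < cdf (\<lambda>u. \<rho> u / l1norm \<rho>) t \<and> cdf (\<lambda>u. \<rho> u / l1norm \<rho>) t < 1"
  shows "cdt_star \<rho> (\<lambda>t. p (t - c)) = (if l1norm p = 0 then (\<lambda>_. 0) else (\<lambda>t. t + c) \<circ> cdt_star \<rho> p)"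
proof (cases "l1norm p = 0")
  case True
  then show ?thesis unfolding cdt_star_def l1norm_shift by simp
next
  case False
  have "gen_inv (cdf (\<lambda>u. p (u - c) / l1norm p)) (cdf (\<lambda>u. \<rho> u / l1norm \<rho>) t)
      = gen_inv (cdf (\<lambda>u. p u / l1norm p)) (cdf (\<lambda>u. \<rho> u / l1norm \<rho>) t) + c" for t
  proof -
    have e: "cdf (\<lambda>u. p (u - c) / l1norm p) = (\<lambda>x. cdf (\<lambda>u. p u / l1norm p) (x - c))"
      using cdf_shift[of "\<lambda>u. p u / l1norm p" c] by auto
    show ?thesis unfolding e
      by (rule gen_inv_shift) (use cdf_set_props[OF nn False] rho[of t] in auto)
  qed
  then show ?thesis using False unfolding cdt_star_def l1norm_shift by (auto simp: fun_eq_iff)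
qed

theorem mainTheorem2:
  fixes r s :: "real \<times> real \<Rightarrow> real" and x\<^sub>0 y\<^sub>0 \<theta> :: real
  assumes r_pos: "\<And>x. r x > 0"
    and r_int: "integrable lborel r"
    and s_int: "integrable lborel s"
    and \<theta>: "\<theta> \<in> {0..pi}"
  shows "let s\<^sub>1 = (\<lambda>(x1, x2). s (x1 - x\<^sub>0, x2 - y\<^sub>0));
             g_inv = (\<lambda>t. t + x\<^sub>0 * cos \<theta> + y\<^sub>0 * sin \<theta>);
             sp = pos_part (\<lambda>t. radon s t \<theta>);
             sn = neg_part (\<lambda>t. radon s t \<theta>);
             \<rho> = (\<lambda>t. radon r t \<theta>)
         in RSCDT r s\<^sub>1 \<theta> =
            (if l1norm sp = 0 then (\<lambda>_. 0) else g_inv \<circ> cdt_star \<rho> sp,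
             l1norm sp,
             if l1norm sn = 0 then (\<lambda>_. 0) else g_inv \<circ> cdt_star \<rho> sn,
             l1norm sn)"
proof -
  define c where "c = x\<^sub>0 * cos \<theta> + y\<^sub>0 * sin \<theta>"
  define sp where "sp = pos_part (\<lambda>t. radon s t \<theta>)"
  define sn where "sn = neg_part (\<lambda>t. radon s t \<theta>)"
  define \<rho> where "\<rho> = (\<lambda>t. radon r t \<theta>)"
  have rho: "\<And>t. 0 < cdf (\<lambda>u. \<rho> u / l1norm \<rho>) t \<and> cdf (\<lambda>u. \<rho> u / l1norm \<rho>) t < 1"
    unfolding \<rho>_def by (rule cdf_rho[OF r_pos r_int])
  have g: "(\<lambda>t. t + x\<^sub>0 * cos \<theta> + y\<^sub>0 * sin \<theta>) = (\<lambda>t. t + c)"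
    unfolding c_def by (auto simp: algebra_simps)
  have rs: "(\<lambda>t. radon (\<lambda>(x1, x2). s (x1 - x\<^sub>0, x2 - y\<^sub>0)) t \<theta>) = (\<lambda>t. radon s (t - c) \<theta>)"
    unfolding c_def by (rule ext) (rule radon_shift)
  have pp: "pos_part (\<lambda>t. radon s (t - c) \<theta>) = (\<lambda>t. sp (t - c))"
    unfolding sp_def pos_part_def by simp
  have np: "neg_part (\<lambda>t. radon s (t - c) \<theta>) = (\<lambda>t. sn (t - c))"
    unfolding sn_def neg_part_def by simp
  have spn: "\<And>u. sp u \<ge> 0" "\<And>u. sn u \<ge> 0"
    unfolding sp_def sn_def pos_part_def neg_part_def by auto
  show ?thesis
    unfolding Let_def g RSCDT_def SCDT_def rs pp np
    unfolding sp_def[symmetric] sn_def[symmetric] \<rho>_def[symmetric]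
    using cdt_star_shift[where p = sp and c = c, OF spn(1) rho] cdt_star_shift[where p = sn and c = c, OF spn(2) rho]
    by (simp add: l1norm_shift)
qed

end
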